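(* Let $\Delta$ be a simplicial polytopal fan in $\mathbb{R}^d$ with ray generators $\mathbf{v}_1,\ldots,\mathbf{v}_n$ and maximal cones (facets) $F_1,\ldots,F_r$. Then the ray-facet incidence graph $G_\Delta$ has a matching of size $n$.
   Context: A fan is simplicial if every cone is generated by linearly independent vectors; polytopal if it is the normal fan of a polytope (so it is complete and full-dimensional). The ray-facet incidence graph $G_\Delta$ is the bipartite graph on $[n]\sqcup[r]$ in which $i\in[n]$ and $j\in[r]$ are adjacent iff $\mathbf{v}_i$ is a generator of $F_j$. *)

theory Defs
  imports "HOL-Analysis.Analysis"
begin

definition normal_cone :: "(real^'d) set \<Rightarrow> (real^'d) set \<Rightarrow> (real^'d) set" where
  "normal_cone P G = {c. \<forall>x\<in>G. \<forall>y\<in>P. c \<bullet> y \<le> c \<bullet> x}"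

definition normal_fan :: "(real^'d) set \<Rightarrow> (real^'d) set set" where
  "normal_fan P = {normal_cone P G | G. G face_of P \<and> G \<noteq> {}}"

definition simplicial_fan :: "(real^'d) set set \<Rightarrow> bool" where
  "simplicial_fan \<Delta> \<longleftrightarrow> (\<forall>C\<in>\<Delta>. \<exists>S. independent S \<and> C = convex_cone hull S)"

definition polytopal_fan :: "(real^'d) set set \<Rightarrow> bool" where
  "polytopal_fan \<Delta> \<longleftrightarrow> (\<exists>P. polytope P \<and> interior P \<noteq> {} \<and> \<Delta> = normal_fan P)"

definition rays_of :: "(real^'d) set set \<Rightarrow> (real^'d) set set" where
  "rays_of \<Delta> = {C \<in> \<Delta>. aff_dim C = 1}"

definition maximal_cones :: "(real^'d) set set \<Rightarrow> (real^'d) set set" where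
  "maximal_cones \<Delta> = {C \<in> \<Delta>. \<not> (\<exists>C'\<in>\<Delta>. C \<subset> C')}"

definition ray_generators :: "(real^'d) set set \<Rightarrow> nat \<Rightarrow> (nat \<Rightarrow> real^'d) \<Rightarrow> bool" where
  "ray_generators \<Delta> n v \<longleftrightarrow> (\<forall>i<n. v i \<noteq> 0) \<and>
     bij_betw (\<lambda>i. cone hull {v i}) {..<n} (rays_of \<Delta>)"

definition facet_enum :: "(real^'d) set set \<Rightarrow> nat \<Rightarrow> (nat \<Rightarrow> (real^'d) set) \<Rightarrow> bool" where
  "facet_enum \<Delta> r F \<longleftrightarrow> bij_betw F {..<r} (maximal_cones \<Delta>)"

text \<open>Ray-facet incidence graph: bipartite on [n] \<sqcup> [r]; edge (i,j) iff v_i is a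
  generator of F_j (i.e. v_i lies in F_j; in a simplicial fan this means the ray of v_i
  is one of the extreme rays of F_j).\<close>
definition incidence_edges :: "nat \<Rightarrow> nat \<Rightarrow> (nat \<Rightarrow> real^'d) \<Rightarrow> (nat \<Rightarrow> (real^'d) set) \<Rightarrow> (nat \<times> nat) set" where
  "incidence_edges n r v F = {(i, j). i < n \<and> j < r \<and> v i \<in> F j}"

definition bipartite_matching :: "(nat \<times> nat) set \<Rightarrow> (nat \<times> nat) set \<Rightarrow> bool" where
  "bipartite_matching E M \<longleftrightarrow> M \<subseteq> E \<and>
     (\<forall>e\<in>M. \<forall>e'\<in>M. e \<noteq> e' \<longrightarrow> fst e \<noteq> fst e' \<and> snd e \<noteq> snd e')"

end

theory Submission
  imports Defs
begin


lemma hall: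
  fixes A :: "'a \<Rightarrow> 'b set"
  assumes "finite I" "\<forall>i\<in>I. finite (A i)" "\<forall>J\<subseteq>I. card J \<le> card (\<Union>(A ` J))"
  shows "\<exists>f. inj_on f I \<and> (\<forall>i\<in>I. f i \<in> A i)"
  using assms
proof (induction "card I" arbitrary: I A rule: less_induct)
  case less
  note fin = less.prems(1) and finA = less.prems(2) and hc = less.prems(3)
  have finU: "finite (\<Union>(A ` J))" if "J \<subseteq> I" for J
    using that fin finA by (meson finite_UN_I finite_subset subsetD)
  show ?case
  proof (cases "I = {}")
    case True then show ?thesis by auto
  next
    case nonempty: False
    show ?thesis
    proof (cases "\<exists>J. J \<noteq> {} \<and> J \<subset> I \<and> card (\<Union>(A ` J)) = card J")
      case True
      then obtain J where J: "J \<noteq> {}" "J \<subset> I" "card (\<Union>(A ` J)) = card J" by blast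
      define U where "U = \<Union>(A ` J)"
      have finJ: "finite J" using J fin finite_subset by blast
      have "card J < card I" using J fin psubset_card_mono by blast
      moreover have "\<forall>J'\<subseteq>J. card J' \<le> card (\<Union>(A ` J'))" using hc J by auto
      ultimately obtain f1 where f1: "inj_on f1 J" "\<forall>i\<in>J. f1 i \<in> A i"
        using less.hyps[of J A] finJ finA J by auto
      define A' where "A' = (\<lambda>i. A i - U)"
      have "card (I - J) < card I"
      proof -
        have "card (I - J) = card I - card J" using J finJ by (simp add: card_Diff_subset psubset_imp_subset)
        moreover have "card J > 0" using J finJ by (simp add: card_gt_0_iff)
        moreover have "card J \<le> card I" using J fin by (simp add: card_mono psubset_imp_subset)
        ultimately show ?thesis by linarith
      qed
      moreover have "\<forall>K\<subseteq>I - J. card K \<le> card (\<Union>(A' ` K))"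
      proof (intro allI impI)
        fix K assume K: "K \<subseteq> I - J"
        have e: "\<Union>(A' ` K) = \<Union>(A ` (K \<union> J)) - U" unfolding A'_def U_def by auto
        have sub: "U \<subseteq> \<Union>(A ` (K \<union> J))" unfolding U_def by auto
        have fKJ: "finite (\<Union>(A ` (K \<union> J)))" using finU K J by auto
        have "card (\<Union>(A' ` K)) = card (\<Union>(A ` (K \<union> J))) - card U"
          using e sub fKJ by (simp add: card_Diff_subset finite_subset)
        moreover have "card (K \<union> J) \<le> card (\<Union>(A ` (K \<union> J)))"
        proof -
          have "K \<union> J \<subseteq> I" using K J by auto
          then show ?thesis using hc by blast
        qed
        moreover have "card (K \<union> J) = card K + card J"
        proof (rule card_Un_disjoint)
          show "finite K" using K fin finite_subset by blast
          show "finite J" by (rule finJ)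
          show "K \<inter> J = {}" using K by blast
        qed
        ultimately show "card K \<le> card (\<Union>(A' ` K))" using J(3) unfolding U_def by linarith
      qed
      ultimately obtain f2 where f2: "inj_on f2 (I - J)" "\<forall>i\<in>I - J. f2 i \<in> A' i"
        using less.hyps[of "I - J" A'] fin finA unfolding A'_def by auto
      define f where "f = (\<lambda>i. if i \<in> J then f1 i else f2 i)"
      have "inj_on f I"
      proof (rule inj_onI)
        fix x y assume xy: "x \<in> I" "y \<in> I" "f x = f y"
        show "x = y"
        proof (cases "x \<in> J"; cases "y \<in> J")
          assume "x \<in> J" "y \<in> J" then show ?thesis using xy f1 unfolding f_def by (auto dest: inj_onD)
        next
          assume "x \<notin> J" "y \<notin> J" then show ?thesis using xy f2 unfolding f_def by (auto dest: inj_onD)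
        next
          assume a: "x \<in> J" "y \<notin> J"
          have "f x \<in> U" using a f1 unfolding f_def U_def by auto
          moreover have "f y \<notin> U" using a f2 xy(2) unfolding f_def A'_def by auto
          ultimately show ?thesis using xy by auto
        next
          assume a: "x \<notin> J" "y \<in> J"
          have "f y \<in> U" using a f1 unfolding f_def U_def by auto
          moreover have "f x \<notin> U" using a f2 xy(1) unfolding f_def A'_def by auto
          ultimately show ?thesis using xy by auto
        qed
      qed
      moreover have "\<forall>i\<in>I. f i \<in> A i" using f1 f2 unfolding f_def A'_def by auto
      ultimately show ?thesis by blast
    next
      case False
      then have strict: "card J < card (\<Union>(A ` J))" if "J \<noteq> {}" "J \<subset> I" for J
        using hc that by (metis le_neq_implies_less psubset_imp_subset)
      obtain i0 where i0: "i0 \<in> I" using nonempty by blast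
      have "card {i0} \<le> card (\<Union>(A ` {i0}))" using hc i0 by blast
      then have "A i0 \<noteq> {}" by auto
      then obtain y where y: "y \<in> A i0" by blast
      define A' where "A' = (\<lambda>i. A i - {y})"
      have "card (I - {i0}) < card I" using fin i0 by (meson card_Diff1_less)
      moreover have "\<forall>K\<subseteq>I - {i0}. card K \<le> card (\<Union>(A' ` K))"
      proof (intro allI impI)
        fix K assume K: "K \<subseteq> I - {i0}"
        show "card K \<le> card (\<Union>(A' ` K))"
        proof (cases "K = {}")
          case True then show ?thesis by simp
        next
          case False
          have "K \<subset> I" using K i0 by blast
          then have "card K < card (\<Union>(A ` K))" using strict False by blast
          moreover have "\<Union>(A' ` K) = \<Union>(A ` K) - {y}" unfolding A'_def by auto
          moreover have "finite (\<Union>(A ` K))" using finU K by blast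
          ultimately show ?thesis by (simp add: card_Diff_singleton_if) linarith
        qed
      qed
      ultimately obtain f' where f': "inj_on f' (I - {i0})" "\<forall>i\<in>I - {i0}. f' i \<in> A' i"
        using less.hyps[of "I - {i0}" A'] fin finA unfolding A'_def by auto
      define f where "f = f'(i0 := y)"
      have "inj_on f (I - {i0})" using f' unfolding f_def by (simp add: inj_on_def)
      moreover have "f i0 \<notin> f ` (I - {i0})" using f' unfolding f_def A'_def by auto
      ultimately have "inj_on f (insert i0 (I - {i0}))" by (simp only: inj_on_insert) blast
      then have "inj_on f I" using i0 by (metis insert_Diff)
      moreover have "\<forall>i\<in>I. f i \<in> A i" using f' y unfolding f_def A'_def by auto
      ultimately show ?thesis by blast
    qed
  qed
qed

lemma hall_degree:
  fixes A :: "'a \<Rightarrow> 'b set"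
  assumes fin: "finite I" and finA: "\<forall>i\<in>I. finite (A i)" and dpos: "d > 0"
    and ldeg: "\<forall>i\<in>I. d \<le> card (A i)" and rdeg: "\<forall>x. card {i\<in>I. x \<in> A i} \<le> d"
  shows "\<exists>f. inj_on f I \<and> (\<forall>i\<in>I. f i \<in> A i)"
proof (rule hall[OF fin finA], intro allI impI)
  fix J assume J: "J \<subseteq> I"
  define U where "U = \<Union>(A ` J)"
  have finJ: "finite J" using J fin finite_subset by blast
  have finU: "finite U" unfolding U_def using finJ finA J by auto
  have "d * card J = (\<Sum>i\<in>J. d)" by simp
  also have "\<dots> \<le> (\<Sum>i\<in>J. card (A i))" using ldeg J by (intro sum_mono) auto
  also have "\<dots> = card (SIGMA i:J. A i)" using finJ finA J by (subst card_SigmaI) auto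
  also have "(SIGMA i:J. A i) = prod.swap ` (SIGMA x:U. {i\<in>J. x \<in> A i})" unfolding U_def by auto
  also have "card \<dots> = card (SIGMA x:U. {i\<in>J. x \<in> A i})" by (rule card_image) (simp add: inj_on_def)
  also have "\<dots> = (\<Sum>x\<in>U. card {i\<in>J. x \<in> A i})" using finU finJ by (subst card_SigmaI) auto
  also have "\<dots> \<le> (\<Sum>x\<in>U. d)"
  proof (rule sum_mono)
    fix x assume "x \<in> U"
    have "card {i\<in>J. x \<in> A i} \<le> card {i\<in>I. x \<in> A i}" using J fin by (intro card_mono) auto
    then show "card {i\<in>J. x \<in> A i} \<le> d" using rdeg by (meson le_trans)
  qed
  also have "\<dots> = d * card U" by simp
  finally show "card J \<le> card (\<Union>(A ` J))" using dpos unfolding U_def by simp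
qed



lemma cone_hull_sing: "c \<in> cone hull {v} \<longleftrightarrow> (\<exists>t\<ge>0. c = t *\<^sub>R v)"
  by (auto simp: cone_hull_expl)

lemma cone_hull_scale:
  assumes "t > 0" shows "cone hull {t *\<^sub>R v} = cone hull {v}"
proof -
  have "(\<exists>s\<ge>0. c = s *\<^sub>R (t *\<^sub>R v)) \<longleftrightarrow> (\<exists>s\<ge>0. c = s *\<^sub>R v)" for c
  proof
    assume "\<exists>s\<ge>0. c = s *\<^sub>R (t *\<^sub>R v)" then show "\<exists>s\<ge>0. c = s *\<^sub>R v"
      using assms by (metis mult_nonneg_nonneg order_less_imp_le scaleR_scaleR)
  next
    assume "\<exists>s\<ge>0. c = s *\<^sub>R v"
    then obtain s where s: "s \<ge> 0" "c = s *\<^sub>R v" by blast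
    then have "c = (s / t) *\<^sub>R (t *\<^sub>R v)" using assms by simp
    moreover have "s / t \<ge> 0" using s assms by simp
    ultimately show "\<exists>s\<ge>0. c = s *\<^sub>R (t *\<^sub>R v)" by blast
  qed
  then show ?thesis by (simp add: set_eq_iff cone_hull_sing)
qed

lemma nc_anti: "G \<subseteq> G' \<Longrightarrow> normal_cone P G' \<subseteq> normal_cone P G"
  unfolding normal_cone_def by auto

lemma ray_face:
  fixes P :: "(real^'d) set" and v :: "real^'d"
  assumes G: "G face_of P" "G \<noteq> {}" and R: "cone hull {v} = normal_cone P G"
    and cP: "convex P"
  shows "normal_cone P {x\<in>P. \<forall>y\<in>P. v \<bullet> y \<le> v \<bullet> x} \<subseteq> cone hull {v}"
    "{x\<in>P. \<forall>y\<in>P. v \<bullet> y \<le> v \<bullet> x} face_of P"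
    "G \<subseteq> {x\<in>P. \<forall>y\<in>P. v \<bullet> y \<le> v \<bullet> x}"
proof -
  define H where "H = {x\<in>P. \<forall>y\<in>P. v \<bullet> y \<le> v \<bullet> x}"
  have "v \<in> cone hull {v}" by (simp add: hull_inc)
  then have vN: "\<forall>x\<in>G. \<forall>y\<in>P. v \<bullet> y \<le> v \<bullet> x" using R unfolding normal_cone_def by auto
  have GP: "G \<subseteq> P" using G face_of_imp_subset by blast
  show GH: "G \<subseteq> {x\<in>P. \<forall>y\<in>P. v \<bullet> y \<le> v \<bullet> x}" using vN GP by auto
  show "normal_cone P {x\<in>P. \<forall>y\<in>P. v \<bullet> y \<le> v \<bullet> x} \<subseteq> cone hull {v}"
    using nc_anti[OF GH] R by simp
  obtain g where g: "g \<in> G" using G by blast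
  have "H = P \<inter> {x. v \<bullet> x = v \<bullet> g}"
    using g GP vN unfolding H_def by (auto intro: order_antisym)
  moreover have "(P \<inter> {x. v \<bullet> x = v \<bullet> g}) face_of P"
    using g vN by (intro face_of_Int_supporting_hyperplane_le cP) auto
  ultimately show "{x\<in>P. \<forall>y\<in>P. v \<bullet> y \<le> v \<bullet> x} face_of P" unfolding H_def by simp
qed

lemma ray_facet:
  fixes P :: "(real^'d) set" and v :: "real^'d"
  assumes P: "polytope P" "interior P \<noteq> {}"
    and G: "G face_of P" "G \<noteq> {}" and R: "cone hull {v} = normal_cone P G" and v0: "v \<noteq> 0"
  shows "CARD('d) \<le> card {x. x extreme_point_of P \<and> x \<in> {x\<in>P. \<forall>y\<in>P. v \<bullet> y \<le> v \<bullet> x}}"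
proof -
  define H where "H = {x\<in>P. \<forall>y\<in>P. v \<bullet> y \<le> v \<bullet> x}"
  have cP: "convex P" using P polytope_imp_convex by blast
  note rf = ray_face[OF G R cP, folded H_def]
  have Hne: "H \<noteq> {}" using rf(3) G by blast
  have HP: "H \<noteq> P"
  proof
    assume HP: "H = P"
    obtain p where p: "p \<in> interior P" using P by blast
    then obtain e where e: "e > 0" "ball p e \<subseteq> P" using mem_interior by blast
    define q where "q = p + (e / 2 / norm v) *\<^sub>R v"
    have "dist p q < e" unfolding q_def dist_norm using e v0 by simp
    then have qP: "q \<in> P" using e by auto
    have pP: "p \<in> P" using p interior_subset by blast
    have "v \<bullet> q \<le> v \<bullet> p" using HP qP pP unfolding H_def by blast
    moreover have "v \<bullet> q = v \<bullet> p + (e / 2 / norm v) * (v \<bullet> v)"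
      unfolding q_def by (simp add: inner_add_right)
    moreover have "(e / 2 / norm v) * (v \<bullet> v) > 0" using e v0 by simp
    ultimately show False by linarith
  qed
  have polyP: "polyhedron P" using P polytope_imp_polyhedron by blast
  obtain F' where F': "F' facet_of P" "H \<subseteq> F'"
    using face_of_polyhedron_subset_facet[OF polyP rf(2) Hne HP] by blast
  have "F' exposed_face_of P" using exposed_face_of_polyhedron[OF polyP] F' facet_of_imp_face_of by blast
  moreover have "F' \<noteq> {}" "F' \<noteq> P" using F' facet_of_def facet_of_irrefl by blast+
  ultimately obtain a b where ab: "a \<noteq> 0" "P \<subseteq> {x. a \<bullet> x \<le> b}" "F' = P \<inter> {x. a \<bullet> x = b}"
    unfolding exposed_face_of by blast
  have "a \<in> normal_cone P F'" using ab unfolding normal_cone_def by auto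
  then have "a \<in> cone hull {v}" using nc_anti[OF F'(2)] rf(1) by blast
  then obtain t where t: "t \<ge> 0" "a = t *\<^sub>R v" by (auto simp: cone_hull_sing)
  have tpos: "t > 0" using t ab(1) by (cases "t = 0") auto
  have "F' \<subseteq> H"
  proof
    fix x assume x: "x \<in> F'"
    have "v \<bullet> y \<le> v \<bullet> x" if "y \<in> P" for y
    proof -
      have "t * (v \<bullet> y) \<le> t * (v \<bullet> x)" using ab x that t by auto
      then show ?thesis using tpos by simp
    qed
    then show "x \<in> H" using x ab unfolding H_def by auto
  qed
  then have HF: "H facet_of P" using F' by auto
  have affP: "aff_dim P = int CARD('d)" using aff_dim_nonempty_interior[OF P(2)] by simp
  have affH: "aff_dim H = int CARD('d) - 1" using HF affP unfolding facet_of_def by simp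
  define E where "E = {x. x extreme_point_of H}"
  have polyH: "polytope H" using face_of_polytope_polytope[OF P(1) rf(2)] .
  have "H = convex hull E" unfolding E_def
    using Krein_Milman_Minkowski polyH polytope_imp_compact polytope_imp_convex by blast
  then have "aff_dim H = aff_dim E" by (simp add: aff_dim_convex_hull)
  moreover have finE: "finite E" unfolding E_def
    using finite_polyhedron_extreme_points polyH polytope_imp_polyhedron by blast
  ultimately have "int CARD('d) - 1 \<le> int (card E) - 1" using aff_dim_le_card[of E] affH by simp
  then have c1: "CARD('d) \<le> card E" by simp
  have "E \<subseteq> {x. x extreme_point_of P \<and> x \<in> H}"
  proof
    fix x assume "x \<in> E"
    then have xe: "x extreme_point_of H" unfolding E_def by simp
    then have "{x} face_of H" by (simp only: face_of_singleton)
    then have "{x} face_of P" using face_of_trans rf(2) by blast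
    then have "x extreme_point_of P" by (simp only: face_of_singleton)
    moreover have "x \<in> H" using xe extreme_point_of_def by blast
    ultimately show "x \<in> {x. x extreme_point_of P \<and> x \<in> H}" by simp
  qed
  moreover have "finite {x. x extreme_point_of P \<and> x \<in> H}"
    using finite_polyhedron_extreme_points[OF polyP] by (rule rev_finite_subset) auto
  ultimately have "card E \<le> card {x. x extreme_point_of P \<and> x \<in> H}" by (rule card_mono[rotated])
  then show ?thesis using c1 unfolding H_def by linarith
qed

lemma vertex_exposed:
  fixes P :: "(real^'d) set"
  assumes P: "polytope P" and x: "x extreme_point_of P"
  obtains c where "c \<in> normal_cone P {x}" "\<And>G. c \<in> normal_cone P G \<Longrightarrow> G \<subseteq> P \<Longrightarrow> G \<subseteq> {x}"
proof -
  have "{x} face_of P" using x face_of_singleton by blast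
  then have "{x} exposed_face_of P"
    using exposed_face_of_polyhedron P polytope_imp_polyhedron by blast
  then obtain c b where cb: "P \<subseteq> {y. c \<bullet> y \<le> b}" "{x} = P \<inter> {y. c \<bullet> y = b}"
    unfolding exposed_face_of_def by blast
  have "x \<in> P \<inter> {y. c \<bullet> y = b}" by (subst cb(2)[symmetric]) simp
  then have xP: "x \<in> P" "c \<bullet> x = b" by auto
  show ?thesis
  proof
    show "c \<in> normal_cone P {x}" using cb(1) xP unfolding normal_cone_def by auto
    fix G assume cG: "c \<in> normal_cone P G" and GP: "G \<subseteq> P"
    show "G \<subseteq> {x}"
    proof
      fix y assume y: "y \<in> G"
      have "c \<bullet> x \<le> c \<bullet> y" using cG y xP unfolding normal_cone_def by auto
      moreover have "c \<bullet> y \<le> b" using cb(1) y GP by auto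
      ultimately have "y \<in> P \<inter> {y. c \<bullet> y = b}" using y GP xP by auto
      then show "y \<in> {x}" by (subst cb(2))
    qed
  qed
qed

lemma vertex_maximal:
  fixes P :: "(real^'d) set"
  assumes P: "polytope P" and x: "x extreme_point_of P"
  shows "normal_cone P {x} \<in> maximal_cones (normal_fan P)"
proof -
  obtain c where c: "c \<in> normal_cone P {x}" "\<And>G. c \<in> normal_cone P G \<Longrightarrow> G \<subseteq> P \<Longrightarrow> G \<subseteq> {x}"
    using vertex_exposed[OF P x] by blast
  have inD: "normal_cone P {x} \<in> normal_fan P"
  proof -
    have fx: "{x} face_of P" using x face_of_singleton by blast
    show ?thesis unfolding normal_fan_def
      apply (rule CollectI)
      apply (rule exI[of _ "{x}"])
      apply (intro conjI refl fx)
      apply simp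
      done
  qed
  have "\<not> (normal_cone P {x} \<subset> C')" if "C' \<in> normal_fan P" for C'
  proof
    assume sub: "normal_cone P {x} \<subset> C'"
    have "\<exists>G. C' = normal_cone P G \<and> G face_of P \<and> G \<noteq> {}"
      using that by (simp add: normal_fan_def)
    then obtain G where G: "G face_of P" "G \<noteq> {}" "C' = normal_cone P G"
      by blast
    have "c \<in> normal_cone P G" using c(1) sub G(3) by blast
    moreover have "G \<subseteq> P" using G(1) face_of_imp_subset by blast
    ultimately have "G \<subseteq> {x}" using c(2) by blast
    then have "G = {x}" using G(2) by blast
    then have "C' = normal_cone P {x}" using G(3) by simp
    then show False using sub by simp
  qed
  then have "\<not> (\<exists>C'\<in>normal_fan P. normal_cone P {x} \<subset> C')" by blast
  then show ?thesis using inD unfolding maximal_cones_def by simp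
qed

lemma vertex_inj:
  fixes P :: "(real^'d) set"
  assumes P: "polytope P" and x: "x extreme_point_of P" and x': "x' extreme_point_of P"
    and eq: "normal_cone P {x'} = normal_cone P {x}"
  shows "x' = x"
proof -
  obtain c where c: "c \<in> normal_cone P {x}" "\<And>G. c \<in> normal_cone P G \<Longrightarrow> G \<subseteq> P \<Longrightarrow> G \<subseteq> {x}"
    using vertex_exposed[OF P x] by blast
  have "x' \<in> P" using x' extreme_point_of_def by blast
  then have "{x'} \<subseteq> P" by simp
  moreover have "c \<in> normal_cone P {x'}" using c(1) eq by simp
  ultimately have "{x'} \<subseteq> {x}" using c(2) by blast
  then show ?thesis by simp
qed



lemma vertex_deg:
  fixes P :: "(real^'d) set" and v :: "nat \<Rightarrow> real^'d"
  assumes cP: "convex P" and xP: "x \<in> P"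
    and S: "normal_cone P {x} = convex_cone hull S" "independent S"
    and v0: "\<forall>i<n. v i \<noteq> 0"
    and inj: "inj_on (\<lambda>i. cone hull {v i}) {..<n}"
    and rays: "\<forall>i<n. \<exists>G. G face_of P \<and> G \<noteq> {} \<and> cone hull {v i} = normal_cone P G"
  shows "card {i\<in>{..<n}. x \<in> {y\<in>P. \<forall>z\<in>P. v i \<bullet> z \<le> v i \<bullet> y}} \<le> CARD('d)"
proof -
  define K where "K = {i\<in>{..<n}. x \<in> {y\<in>P. \<forall>z\<in>P. v i \<bullet> z \<le> v i \<bullet> y}}"
  have finS: "finite S" "card S \<le> CARD('d)" using independent_bound[OF S(2)] by simp_all
  have S0: "0 \<notin> S" using S(2) dependent_zero by blast
  have sN: "\<forall>z\<in>P. s \<bullet> z \<le> s \<bullet> x" if "s \<in> S" for s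
  proof -
    have "s \<in> convex_cone hull S" using that by (rule hull_inc)
    then have "s \<in> normal_cone P {x}" using S(1) by simp
    then show ?thesis unfolding normal_cone_def by simp
  qed
  have key: "\<exists>s. s \<in> S \<and> (\<exists>t>0. s = t *\<^sub>R v i)" if i: "i \<in> K" for i
  proof -
    have ilt: "i < n" and xH: "\<forall>z\<in>P. v i \<bullet> z \<le> v i \<bullet> x" using i unfolding K_def by auto
    obtain G where G: "G face_of P" "G \<noteq> {}" "cone hull {v i} = normal_cone P G"
      using rays ilt by blast
    note rf = ray_face[OF G cP]
    define H where "H = {y\<in>P. \<forall>z\<in>P. v i \<bullet> z \<le> v i \<bullet> y}"
    have NH: "normal_cone P H \<subseteq> cone hull {v i}" using rf(1) unfolding H_def .
    have "v i \<in> normal_cone P {x}" using xH unfolding normal_cone_def by auto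
    then have vS: "v i \<in> convex_cone hull S" using S(1) by simp
    have Sne: "S \<noteq> {}"
    proof
      assume "S = {}"
      then have "v i = 0" using vS by simp
      then show False using v0 ilt by blast
    qed
    obtain z c where zc: "z \<in> convex hull S" "c \<ge> 0" "v i = c *\<^sub>R z"
      using vS convex_cone_hull_convex_hull_nonempty[OF Sne] by blast
    obtain u where u: "\<forall>s\<in>S. 0 \<le> u s" "sum u S = 1" "(\<Sum>s\<in>S. u s *\<^sub>R s) = z"
      using zc(1) convex_hull_finite[OF finS(1)] by blast
    have cpos: "c > 0"
    proof (rule ccontr)
      assume "\<not> c > 0"
      then have "c = 0" using zc(2) by simp
      then have "v i = 0" using zc(3) by simp
      then show False using v0 ilt by blast
    qed
    have "\<exists>s\<in>S. u s > 0"
    proof (rule ccontr)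
      assume "\<not> (\<exists>s\<in>S. u s > 0)"
      then have "\<forall>s\<in>S. u s = 0" using u(1) by force
      then have "sum u S = 0" by simp
      then show False using u(2) by simp
    qed
    then obtain s0 where s0: "s0 \<in> S" "u s0 > 0" by blast
    have "s0 \<in> normal_cone P H"
      unfolding normal_cone_def
    proof (intro CollectI ballI)
      fix y w assume y: "y \<in> H" and w: "w \<in> P"
      have yP: "y \<in> P" and vyx: "v i \<bullet> x \<le> v i \<bullet> y" using y xP unfolding H_def by auto
      have vxy: "v i \<bullet> y \<le> v i \<bullet> x" using xH yP by blast
      have nn: "\<forall>s\<in>S. 0 \<le> u s * (s \<bullet> (x - y))"
      proof
        fix s assume s: "s \<in> S"
        have "s \<bullet> y \<le> s \<bullet> x" using sN[OF s] yP by blast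
        then have "0 \<le> s \<bullet> (x - y)" by (simp add: inner_diff_right)
        then show "0 \<le> u s * (s \<bullet> (x - y))" using u(1) s by simp
      qed
      have e1: "v i \<bullet> (x - y) = c * (z \<bullet> (x - y))" using zc(3) by simp
      have e3: "z \<bullet> (x - y) = (\<Sum>s\<in>S. u s * (s \<bullet> (x - y)))"
        unfolding u(3)[symmetric] by (simp add: inner_sum_left)
      have e2: "v i \<bullet> (x - y) = 0" using vyx vxy by (simp add: inner_diff_right)
      have "c * (z \<bullet> (x - y)) = 0" using e1 e2 by linarith
      then have "z \<bullet> (x - y) = 0" using cpos by simp
      then have s0eq: "(\<Sum>s\<in>S. u s * (s \<bullet> (x - y))) = 0" by (simp only: e3[symmetric])
      have nn': "\<And>s. s \<in> S \<Longrightarrow> 0 \<le> u s * (s \<bullet> (x - y))" using nn by blast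
      have iff: "(\<Sum>s\<in>S. u s * (s \<bullet> (x - y))) = 0 \<longleftrightarrow> (\<forall>s\<in>S. u s * (s \<bullet> (x - y)) = 0)"
        using sum_nonneg_eq_0_iff[of S "\<lambda>s. u s * (s \<bullet> (x - y))"] finS(1) nn' by simp
      have "\<forall>s\<in>S. u s * (s \<bullet> (x - y)) = 0"
        using iff s0eq by simp
      then have "s0 \<bullet> (x - y) = 0" using s0 by force
      then have "s0 \<bullet> x = s0 \<bullet> y" by (simp add: inner_diff_right)
      moreover have "s0 \<bullet> w \<le> s0 \<bullet> x" using sN[OF s0(1)] w by blast
      ultimately show "s0 \<bullet> w \<le> s0 \<bullet> y" by simp
    qed
    then have "s0 \<in> cone hull {v i}" using NH by blast
    then obtain t where t: "t \<ge> 0" "s0 = t *\<^sub>R v i" by (auto simp: cone_hull_sing)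
    have "t \<noteq> 0" using t s0(1) S0 by auto
    then have "t > 0" using t by simp
    then show ?thesis using s0(1) t by blast
  qed
  define g where "g = (\<lambda>i. SOME s. s \<in> S \<and> (\<exists>t>0. s = t *\<^sub>R v i))"
  have g: "g i \<in> S \<and> (\<exists>t>0. g i = t *\<^sub>R v i)" if "i \<in> K" for i
    unfolding g_def by (rule someI_ex) (rule key[OF that])
  have "inj_on g K"
  proof (rule inj_onI)
    fix i j assume i: "i \<in> K" and j: "j \<in> K" and eq: "g i = g j"
    obtain t where t: "t > 0" "g i = t *\<^sub>R v i" using g[OF i] by blast
    obtain t' where t': "t' > 0" "g j = t' *\<^sub>R v j" using g[OF j] by blast
    have "cone hull {v i} = cone hull {g i}" unfolding t(2) by (rule cone_hull_scale[OF t(1), symmetric])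
    also have "\<dots> = cone hull {v j}" unfolding eq t'(2) by (rule cone_hull_scale[OF t'(1)])
    finally have "cone hull {v i} = cone hull {v j}" .
    moreover have "i < n" "j < n" using i j unfolding K_def by auto
    ultimately show "i = j" using inj by (auto dest: inj_onD)
  qed
  then have "card K = card (g ` K)" by (simp add: card_image)
  also have "\<dots> \<le> card S" using g finS(1) by (intro card_mono) auto
  finally show ?thesis using finS(2) unfolding K_def by linarith
qed

theorem lemma3p10:
  fixes \<Delta> :: "(real^'d) set set" and v :: "nat \<Rightarrow> real^'d" and F :: "nat \<Rightarrow> (real^'d) set"
    and n r :: nat
  assumes "simplicial_fan \<Delta>" and "polytopal_fan \<Delta>"
    and "ray_generators \<Delta> n v" and "facet_enum \<Delta> r F"
  shows "\<exists>M. bipartite_matching (incidence_edges n r v F) M \<and> finite M \<and> card M = n"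
proof -
  obtain P where P: "polytope P" "interior P \<noteq> {}" "\<Delta> = normal_fan P"
    using assms(2) unfolding polytopal_fan_def by blast
  have cP: "convex P" using P(1) polytope_imp_convex by blast
  have v0: "\<forall>i<n. v i \<noteq> 0" and bij: "bij_betw (\<lambda>i. cone hull {v i}) {..<n} (rays_of \<Delta>)"
    using assms(3) unfolding ray_generators_def by auto
  have inj: "inj_on (\<lambda>i. cone hull {v i}) {..<n}" using bij bij_betw_def by blast
  have rays: "\<forall>i<n. \<exists>G. G face_of P \<and> G \<noteq> {} \<and> cone hull {v i} = normal_cone P G"
  proof (intro allI impI)
    fix i assume "i < n"
    then have "cone hull {v i} \<in> rays_of \<Delta>" using bij bij_betwE by blast
    then have "cone hull {v i} \<in> normal_fan P" using P(3) unfolding rays_of_def by simp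
    then have "\<exists>G. cone hull {v i} = normal_cone P G \<and> G face_of P \<and> G \<noteq> {}"
      by (simp add: normal_fan_def)
    then show "\<exists>G. G face_of P \<and> G \<noteq> {} \<and> cone hull {v i} = normal_cone P G" by blast
  qed
  define H where "H = (\<lambda>i. {y\<in>P. \<forall>z\<in>P. v i \<bullet> z \<le> v i \<bullet> y})"
  have finV: "finite {x. x extreme_point_of P}"
    using finite_polyhedron_extreme_points P(1) polytope_imp_polyhedron by blast
  define A where "A = (\<lambda>i. {x. x extreme_point_of P \<and> x \<in> H i})"
  have "\<exists>f. inj_on f {..<n} \<and> (\<forall>i\<in>{..<n}. f i \<in> A i)"
  proof (rule hall_degree[where d = "CARD('d)"])
    show "finite {..<n}" by simp
    show "\<forall>i\<in>{..<n}. finite (A i)"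
      unfolding A_def using finV by (auto intro: rev_finite_subset)
    show "0 < CARD('d)" by simp
    show "\<forall>i\<in>{..<n}. CARD('d) \<le> card (A i)"
    proof
      fix i assume "i \<in> {..<n}"
      then have ilt: "i < n" by simp
      obtain G where G: "G face_of P" "G \<noteq> {}" "cone hull {v i} = normal_cone P G"
        using rays ilt by blast
      show "CARD('d) \<le> card (A i)"
        using ray_facet[OF P(1) P(2) G(1) G(2) G(3)] v0 ilt unfolding A_def H_def by blast
    qed
    show "\<forall>x. card {i\<in>{..<n}. x \<in> A i} \<le> CARD('d)"
    proof
      fix x
      show "card {i\<in>{..<n}. x \<in> A i} \<le> CARD('d)"
      proof (cases "x extreme_point_of P")
        case True
        have fx: "{x} face_of P" using True face_of_singleton by blast
        have "normal_cone P {x} \<in> normal_fan P"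
          unfolding normal_fan_def
          apply (rule CollectI)
          apply (rule exI[of _ "{x}"])
          apply (intro conjI refl fx)
          apply simp
          done
        then obtain S where S: "independent S" "normal_cone P {x} = convex_cone hull S"
          using assms(1) P(3) unfolding simplicial_fan_def by blast
        have xP: "x \<in> P" using True extreme_point_of_def by blast
        have "{i\<in>{..<n}. x \<in> A i} = {i\<in>{..<n}. x \<in> {y\<in>P. \<forall>z\<in>P. v i \<bullet> z \<le> v i \<bullet> y}}"
          using True unfolding A_def H_def by auto
        then show ?thesis using vertex_deg[OF cP xP S(2) S(1) v0 inj rays] by simp
      next
        case False
        then have e: "{i\<in>{..<n}. x \<in> A i} = {}" unfolding A_def by auto
        show ?thesis unfolding e by simp
      qed
    qed
  qed
  then obtain f where f: "inj_on f {..<n}" "\<forall>i\<in>{..<n}. f i \<in> A i" by blast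
  have facet: "bij_betw F {..<r} (maximal_cones \<Delta>)" using assms(4) unfolding facet_enum_def .
  have ex_j: "\<exists>j. j < r \<and> F j = normal_cone P {x}" if "x extreme_point_of P" for x
  proof -
    have "normal_cone P {x} \<in> maximal_cones \<Delta>" using vertex_maximal[OF P(1) that] P(3) by simp
    then have "normal_cone P {x} \<in> F ` {..<r}" using facet unfolding bij_betw_def by simp
    then show ?thesis by force
  qed
  define jj where "jj = (\<lambda>x. SOME j. j < r \<and> F j = normal_cone P {x})"
  have jj: "jj x < r \<and> F (jj x) = normal_cone P {x}" if "x extreme_point_of P" for x
    unfolding jj_def by (rule someI_ex) (rule ex_j[OF that])
  have fA: "f i extreme_point_of P" "f i \<in> H i" if "i < n" for i
    using f(2) that unfolding A_def by auto
  define M where "M = (\<lambda>i. (i, jj (f i))) ` {..<n}"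
  have "bipartite_matching (incidence_edges n r v F) M"
    unfolding bipartite_matching_def
  proof
    show "M \<subseteq> incidence_edges n r v F"
    proof
      fix e assume "e \<in> M"
      then obtain i where i: "i < n" "e = (i, jj (f i))" unfolding M_def by auto
      have "v i \<in> normal_cone P {f i}" using fA(2)[OF i(1)] unfolding H_def normal_cone_def by auto
      then show "e \<in> incidence_edges n r v F"
        using i jj[OF fA(1)[OF i(1)]] unfolding incidence_edges_def by auto
    qed
    show "\<forall>e\<in>M. \<forall>e'\<in>M. e \<noteq> e' \<longrightarrow> fst e \<noteq> fst e' \<and> snd e \<noteq> snd e'"
    proof (intro ballI impI)
      fix e e' assume e: "e \<in> M" "e' \<in> M" "e \<noteq> e'"
      obtain i where i: "i < n" "e = (i, jj (f i))" using e(1) unfolding M_def by auto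
      obtain i' where i': "i' < n" "e' = (i', jj (f i'))" using e(2) unfolding M_def by auto
      have ii: "i \<noteq> i'" using e(3) i i' by auto
      then have "f i \<noteq> f i'" using f(1) i(1) i'(1) by (auto dest: inj_onD)
      then have "normal_cone P {f i} \<noteq> normal_cone P {f i'}"
        using vertex_inj[OF P(1) fA(1)[OF i(1)] fA(1)[OF i'(1)]] by auto
      then have "jj (f i) \<noteq> jj (f i')"
        using jj[OF fA(1)[OF i(1)]] jj[OF fA(1)[OF i'(1)]] by metis
      then show "fst e \<noteq> fst e' \<and> snd e \<noteq> snd e'" using i i' ii by simp
    qed
  qed
  moreover have "finite M" unfolding M_def by simp
  moreover have "card M = n" unfolding M_def by (subst card_image) (auto simp: inj_on_def)
  ultimately show ?thesis by blast
qed

end
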